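(* Let $n\geq 3$ and $d\geq 2$ be integers, and let $c,\alpha>0$ be such that for all ${X},{Y}\in\mathbb{R}^{d\times n}$ satisfying $\|{X}\|_{1,2}\leq 1$ and $\|{Y}\|_{1,2}\leq 1$ we have $$c\, d_{\mathcal{G}_{\pm}}^\alpha({X},{Y})\leq d_{\mathcal{D}}({X},{Y}).$$ Then $\alpha\geq 2$.
   Context: A point set is a matrix ${X}\in\mathbb{R}^{d\times n}$ with columns $x_1,\dots,x_n\in\mathbb{R}^d$. The Procrustes Matching metric is $$d_{\mathcal{G}_{\pm}}({X},{Y})=\Big[\min_{(\pi,R,t)\in S_n\times O(d)\times\mathbb{R}^d}\sum_{j=1}^n\|x_j-Ry_{\pi(j)}+t\|_2^2\Big]^{1/2},$$ i.e. the Frobenius distance between ${X}$ and ${Y}$ minimized over column permutations, orthogonal transformations and translations of ${Y}$. The Hard-Gromov-Wasserstein distance is $$d_{\mathcal{D}}({X},{Y})=\min_{\pi\in S_n}\sum_{i,j=1}^n\big|\,\|x_i-x_j\|_2-\|y_{\pi(i)}-y_{\pi(j)}\|_2\,\big|.$$ $\|{X}\|_{1,2}=\max_{1\le i\le n}\|x_i\|_2$. *)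

theory Defs
  imports "HOL-Analysis.Analysis" "HOL-Combinatorics.Permutations"
begin

text \<open>A point set in R^d with n points: columns X j for j < n (values for j >= n are irrelevant).\<close>

definition norm12 :: "nat \<Rightarrow> (nat \<Rightarrow> real^'d) \<Rightarrow> real" where
  "norm12 n X = Max ((\<lambda>j. norm (X j)) ` {..<n})"

text \<open>Procrustes matching metric: minimum over permutations, orthogonal
  transformations and translations (the minimum exists; we take the infimum).\<close>
definition d_PM :: "nat \<Rightarrow> (nat \<Rightarrow> real^'d) \<Rightarrow> (nat \<Rightarrow> real^'d) \<Rightarrow> real" where
  "d_PM n X Y = sqrt (Inf {(\<Sum>j<n. (norm (X j - R (Y (\<pi> j)) + t))\<^sup>2) | \<pi> R t.
        \<pi> permutes {..<n} \<and> orthogonal_transformation R})"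

definition d_HGW :: "nat \<Rightarrow> (nat \<Rightarrow> real^'d) \<Rightarrow> (nat \<Rightarrow> real^'d) \<Rightarrow> real" where
  "d_HGW n X Y = Min {(\<Sum>i<n. \<Sum>j<n. \<bar>dist (X i) (X j) - dist (Y (\<pi> i)) (Y (\<pi> j))\<bar>) | \<pi>.
        \<pi> permutes {..<n}}"

end

theory Submission
  imports Defs
begin

lemma two_idx:
  assumes "CARD('d::finite) \<ge> 2"
  shows "\<exists>i1 i2 :: 'd. i1 \<noteq> i2"
proof (rule ccontr)
  assume "\<not> ?thesis"
  then have "(UNIV :: 'd set) \<subseteq> {undefined}" by auto
  then have "CARD('d) \<le> 1" by (metis card.empty card.insert card_mono empty_iff finite.intros One_nat_def)
  with assms show False by simp
qed

definition pt :: "'d::finite \<Rightarrow> 'd \<Rightarrow> real \<Rightarrow> real \<Rightarrow> real^'d" where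
  "pt i1 i2 x y = x *\<^sub>R axis i1 1 + y *\<^sub>R axis i2 1"

lemma pt_comp1: "i1 \<noteq> i2 \<Longrightarrow> pt i1 i2 x y $ i1 = x"
  by (simp add: pt_def axis_def)
lemma pt_comp2: "i1 \<noteq> i2 \<Longrightarrow> pt i1 i2 x y $ i2 = y"
  by (simp add: pt_def axis_def)

lemma pt_diff: "pt i1 i2 x y - pt i1 i2 x' y' = pt i1 i2 (x - x') (y - y')"
  by (simp add: pt_def algebra_simps)

lemma pt_norm: "i1 \<noteq> i2 \<Longrightarrow> norm (pt i1 i2 x y) = sqrt (x\<^sup>2 + y\<^sup>2)"
  unfolding pt_def norm_eq_sqrt_inner
  by (simp add: inner_add_left inner_add_right inner_axis_axis power2_eq_square)

lemma pt_dist: "i1 \<noteq> i2 \<Longrightarrow> dist (pt i1 i2 x y) (pt i1 i2 x' y') = sqrt ((x - x')\<^sup>2 + (y - y')\<^sup>2)"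
  by (simp add: dist_norm pt_diff pt_norm)

lemma sqrt_bound: "0 \<le> (e::real) \<Longrightarrow> \<bar>sqrt (1/4 + e\<^sup>2) - 1/2\<bar> \<le> e\<^sup>2"
proof -
  assume e: "0 \<le> e"
  have "sqrt (1/4 + e\<^sup>2) \<le> sqrt ((1/2 + e\<^sup>2)\<^sup>2)"
  proof (rule real_sqrt_le_mono)
    have "(1/2 + e\<^sup>2)\<^sup>2 = 1/4 + e\<^sup>2 + (e\<^sup>2)\<^sup>2" by algebra
    then show "1/4 + e\<^sup>2 \<le> (1/2 + e\<^sup>2)\<^sup>2" using zero_le_power2[of "e\<^sup>2"] by linarith
  qed
  also have "\<dots> = 1/2 + e\<^sup>2" by simp
  finally have 1: "sqrt (1/4 + e\<^sup>2) \<le> 1/2 + e\<^sup>2" .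
  have "1/2 = sqrt (1/4::real)" by (simp add: real_sqrt_divide)
  also have "\<dots> \<le> sqrt (1/4 + e\<^sup>2)" by (rule real_sqrt_le_mono) simp
  finally show ?thesis using 1 by linarith
qed

definition xc :: "nat \<Rightarrow> real" where
  "xc j = (if j = 1 then 1/2 else if j = 2 then 0 else -1/2)"
definition yc :: "real \<Rightarrow> nat \<Rightarrow> real" where
  "yc e j = (if j = 2 then e else 0)"

lemma key:
  fixes i1 i2 :: "'d::finite"
  assumes "i1 \<noteq> i2" "0 < e" "e \<le> 1"
    and P: "P = {(-1/2,0),(1/2,0),(0,e)}"
    and "(xa,ya) \<in> P" "(xb,yb) \<in> P" "(xq,yq) \<in> P" "(xa,ya) \<noteq> (xb,yb)"
  shows "e/2 \<le> norm (pt i1 i2 xq yq - (1/2) *\<^sub>R (pt i1 i2 xa ya + pt i1 i2 xb yb))"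
proof -
  have eq: "pt i1 i2 xq yq - (1/2) *\<^sub>R (pt i1 i2 xa ya + pt i1 i2 xb yb)
     = pt i1 i2 (xq - (xa+xb)/2) (yq - (ya+yb)/2)"
    by (simp add: pt_def algebra_simps scaleR_left_distrib add_divide_distrib)
  define u where "u = xq - (xa+xb)/2"
  define v where "v = yq - (ya+yb)/2"
  have n: "norm (pt i1 i2 u v) = sqrt (u\<^sup>2 + v\<^sup>2)" using assms(1) by (rule pt_norm)
  have "\<bar>u\<bar> \<le> sqrt (u\<^sup>2 + v\<^sup>2)" by (metis real_sqrt_abs real_sqrt_le_mono le_add_same_cancel1 zero_le_power2)
  moreover have "\<bar>v\<bar> \<le> sqrt (u\<^sup>2 + v\<^sup>2)" by (metis real_sqrt_abs real_sqrt_le_mono le_add_same_cancel2 zero_le_power2)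
  moreover have "e/2 \<le> \<bar>u\<bar> \<or> e/2 \<le> \<bar>v\<bar>"
    using assms unfolding u_def v_def by auto
  ultimately show ?thesis unfolding eq u_def[symmetric] v_def[symmetric] n by linarith
qed

lemma tri3:
  fixes x y z :: "'a::real_normed_vector"
  shows "norm (x + y - z) \<le> norm x + norm y + norm z"
proof -
  have "norm (x + y - z) \<le> norm (x + y) + norm z" by (rule norm_triangle_ineq4)
  also have "norm (x + y) \<le> norm x + norm y" by (rule norm_triangle_ineq)
  finally show ?thesis by simp
qed

lemma tri4:
  fixes x y z :: "'a::real_normed_vector"
  shows "norm (- z + (1/2) *\<^sub>R (x + y)) \<le> norm z + (1/2) * (norm x + norm y)"
proof -
  have "norm (- z + (1/2) *\<^sub>R (x + y)) \<le> norm (- z) + norm ((1/2) *\<^sub>R (x + y))" by (rule norm_triangle_ineq)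
  also have "norm ((1/2) *\<^sub>R (x + y)) = (1/2) * norm (x + y)" by simp
  also have "norm (x + y) \<le> norm x + norm y" by (rule norm_triangle_ineq)
  finally show ?thesis by simp
qed

lemma lin_comb:
  fixes x0 x1 x2 t e0 e1 e2 :: "'a::real_vector"
  shows "(x2 + t - e2) - (1/2) *\<^sub>R ((x0 + t - e0) + (x1 + t - e1))
     = (x2 - (1/2) *\<^sub>R (x0 + x1)) - e2 + (1/2) *\<^sub>R (e0 + e1)"
proof -
  have "(1/2::real) *\<^sub>R t + (1/2::real) *\<^sub>R t = t"
    by (simp add: scaleR_add_left[symmetric])
  then show ?thesis by (simp add: algebra_simps)
qed

lemma xy_in: "(xc j, yc e j) \<in> {(-1/2,0),(1/2,0),(0,e)}"
  by (simp add: xc_def yc_def)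

lemma norm12_le:
  fixes i1 i2 :: "'d::finite"
  assumes "i1 \<noteq> i2" "0 \<le> e" "e \<le> 1" "n \<ge> 3"
  shows "norm12 n (\<lambda>j. pt i1 i2 (xc j) (yc e j)) \<le> 1"
proof -
  have "norm (pt i1 i2 (xc j) (yc e j)) \<le> 1" for j
  proof -
    have "(xc j)\<^sup>2 + (yc e j)\<^sup>2 \<le> 1"
      using assms by (auto simp: xc_def yc_def power2_eq_square mult_le_one)
    then show ?thesis using assms(1) by (simp add: pt_norm)
  qed
  moreover have "0 \<in> {..<n}" using assms by simp
  then have "{..<n} \<noteq> {}" by blast
  ultimately show ?thesis unfolding norm12_def by (simp add: Max_le_iff)
qed

lemma hgw_le:
  fixes i1 i2 :: "'d::finite"
  assumes "i1 \<noteq> i2" "0 < e"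
  shows "d_HGW n (\<lambda>j. pt i1 i2 (xc j) (yc 0 j)) (\<lambda>j. pt i1 i2 (xc j) (yc e j)) \<le> real n * (real n * e\<^sup>2)"
proof -
  let ?X = "\<lambda>j. pt i1 i2 (xc j) (yc 0 j)" and ?Y = "\<lambda>j. pt i1 i2 (xc j) (yc e j)"
  let ?f = "\<lambda>\<pi>. (\<Sum>i<n. \<Sum>j<n. \<bar>dist (?X i) (?X j) - dist (?Y (\<pi> i)) (?Y (\<pi> j))\<bar>)"
  have fin: "finite {?f \<pi> | \<pi>. \<pi> permutes {..<n}}"
    by (rule finite_image_set) (simp add: finite_permutations)
  have mem: "?f id \<in> {?f \<pi> | \<pi>. \<pi> permutes {..<n}}"
    using permutes_id by fastforce
  have trm: "\<bar>dist (?X i) (?X j) - dist (?Y i) (?Y j)\<bar> \<le> e\<^sup>2" for i j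
  proof -
    have b: "\<bar>sqrt (1/4 + e\<^sup>2) - 1/2\<bar> \<le> e\<^sup>2" using assms by (intro sqrt_bound) simp
    have s4: "sqrt (1/4::real) = 1/2" by (simp add: real_sqrt_divide)
    show ?thesis
      using assms b
      by (cases "i = 2"; cases "j = 2"; cases "i = 1"; cases "j = 1")
         (auto simp: pt_dist xc_def yc_def power2_eq_square abs_minus_commute s4)
  qed
  have "?f id \<le> real n * (real n * e\<^sup>2)"
    using sum_bounded_above[of "{..<n}" "\<lambda>i. \<Sum>j<n. \<bar>dist (?X i) (?X j) - dist (?Y i) (?Y j)\<bar>" "real n * e\<^sup>2"]
      sum_bounded_above[of "{..<n}" "\<lambda>j. \<bar>dist (?X _) (?X j) - dist (?Y _) (?Y j)\<bar>" "e\<^sup>2"] trm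
    by simp
  moreover have "d_HGW n ?X ?Y \<le> ?f id"
    unfolding d_HGW_def by (rule Min_le[OF fin mem])
  ultimately show ?thesis by linarith
qed

lemma pm_ge:
  fixes i1 i2 :: "'d::finite"
  assumes i12: "i1 \<noteq> i2" and e: "0 < e" "e \<le> 1" and n: "n \<ge> 3"
  shows "e/8 \<le> d_PM n (\<lambda>j. pt i1 i2 (xc j) (yc 0 j)) (\<lambda>j. pt i1 i2 (xc j) (yc e j))"
proof -
  let ?X = "\<lambda>j. pt i1 i2 (xc j) (yc 0 j)" and ?Y = "\<lambda>j. pt i1 i2 (xc j) (yc e j)"
  let ?S = "{(\<Sum>j<n. (norm (?X j - R (?Y (\<pi> j)) + t))\<^sup>2) | \<pi> R t.
        \<pi> permutes {..<n} \<and> orthogonal_transformation R}"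
  have ne: "?S \<noteq> {}"
  proof -
    have "(\<Sum>j<n. (norm (?X j - (\<lambda>x. x) (?Y (id j)) + 0))\<^sup>2) \<in> ?S"
      apply (rule CollectI)
      apply (rule exI[of _ id])
      apply (rule exI[of _ "\<lambda>x. x"])
      apply (rule exI[of _ 0])
      by (simp add: permutes_id)
    then show ?thesis by blast
  qed
  have lb: "e\<^sup>2/64 \<le> s" if "s \<in> ?S" for s
  proof -
    obtain \<pi> R t where s: "s = (\<Sum>j<n. (norm (?X j - R (?Y (\<pi> j)) + t))\<^sup>2)"
      and R: "orthogonal_transformation R" using \<open>s \<in> ?S\<close> by blast
    define E where "E j = ?X j - R (?Y (\<pi> j)) + t" for j
    show ?thesis
    proof (rule ccontr)
      assume "\<not> ?thesis"
      then have slt: "s < e\<^sup>2/64" by simp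
      have small: "norm (E k) < e/8" if "k < n" for k
      proof -
        have "(norm (E k))\<^sup>2 \<le> s"
          unfolding s E_def[symmetric]
          by (rule member_le_sum) (use that in auto)
        then have "(norm (E k))\<^sup>2 < (e/8)\<^sup>2" using slt by (simp add: power_divide)
        then show ?thesis by (rule power2_less_imp_less) (use e in simp)
      qed
      have s0: "norm (E 0) < e/8" and s1: "norm (E 1) < e/8" and s2: "norm (E 2) < e/8"
        using small n by auto
      have lin: "linear R" using R by (rule orthogonal_transformation_linear)
      have nR: "norm (R v) = norm v" for v using R by (rule orthogonal_transformation_norm)
      define A where "A = ?Y (\<pi> 0)"
      define B where "B = ?Y (\<pi> 1)"
      define C where "C = ?Y (\<pi> 2)"
      have RA: "R A = ?X 0 + t - E 0" unfolding A_def E_def by simp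
      have RB: "R B = ?X 1 + t - E 1" unfolding B_def E_def by simp
      have RC: "R C = ?X 2 + t - E 2" unfolding C_def E_def by simp
      have X0: "?X 0 = pt i1 i2 (-1/2) 0" and X1: "?X 1 = pt i1 i2 (1/2) 0" and X2: "?X 2 = pt i1 i2 0 0"
        by (simp_all add: xc_def yc_def)
      have p0: "pt i1 i2 0 0 = 0" by (simp add: pt_def)
      have "R (A - B) = ?X 0 - ?X 1 - E 0 + E 1"
        unfolding linear_diff[OF lin] RA RB by (simp add: algebra_simps)
      also have "?X 0 - ?X 1 = pt i1 i2 (-1) 0" unfolding X0 X1 pt_diff by simp
      finally have h1: "R (A - B) = pt i1 i2 (-1) 0 - E 0 + E 1" .
      have h2: "norm (pt i1 i2 (-1) 0) = 1" using i12 by (simp add: pt_norm)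
      have "1 - norm (E 0) - norm (E 1) \<le> norm (A - B)"
      proof -
        note h = h1 h2
        from h1 have "pt i1 i2 (-1) 0 = R (A - B) + E 0 - E 1" by (simp add: algebra_simps)
        then have "norm (pt i1 i2 (-1) 0) \<le> norm (R (A - B)) + norm (E 0) + norm (E 1)"
          by (metis tri3)
        then show ?thesis using h nR[of "A - B"] by linarith
      qed
      then have AB: "A \<noteq> B" using s0 s1 e by auto
      have "R (C - (1/2) *\<^sub>R (A + B)) = R C - (1/2) *\<^sub>R (R A + R B)"
        using lin by (simp add: linear_diff linear_add linear_scale)
      also have "\<dots> = (?X 2 - (1/2) *\<^sub>R (?X 0 + ?X 1)) - E 2 + (1/2) *\<^sub>R (E 0 + E 1)"
        unfolding RA RB RC by (rule lin_comb)
      also have "?X 2 - (1/2) *\<^sub>R (?X 0 + ?X 1) = 0"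
        unfolding X0 X1 X2 p0 by (simp add: pt_def algebra_simps)
      finally have "R (C - (1/2) *\<^sub>R (A + B)) = - E 2 + (1/2) *\<^sub>R (E 0 + E 1)" by simp
      then have "norm (C - (1/2) *\<^sub>R (A + B)) \<le> norm (E 2) + (1/2) * (norm (E 0) + norm (E 1))"
        using nR[of "C - (1/2) *\<^sub>R (A + B)"] tri4[of "E 2" "E 0" "E 1"] by simp
      moreover have "norm (E 2) + (1/2) * (norm (E 0) + norm (E 1)) < e/2"
        using s0 s1 s2 e by (simp add: field_simps)
      ultimately have up: "norm (C - (1/2) *\<^sub>R (A + B)) < e/2" by (rule order_le_less_trans)
      have "e/2 \<le> norm (C - (1/2) *\<^sub>R (A + B))"
        unfolding A_def B_def C_def
        apply (rule key[OF i12 e refl xy_in xy_in xy_in])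
        using AB unfolding A_def B_def by auto
      with up show False by linarith
    qed
  qed
  have "e\<^sup>2/64 \<le> Inf ?S" by (rule cInf_greatest[OF ne lb])
  then have "sqrt (e\<^sup>2/64) \<le> d_PM n ?X ?Y" unfolding d_PM_def by (rule real_sqrt_le_mono)
  moreover have "sqrt (e\<^sup>2/64) = e/8" using e by (simp add: real_sqrt_divide)
  ultimately show ?thesis by simp
qed

theorem theorem2:
  fixes n :: nat and c \<alpha> :: real
  assumes "n \<ge> 3" and "CARD('d::finite) \<ge> 2"
    and "c > 0" and "\<alpha> > 0"
    and "\<forall>X Y :: nat \<Rightarrow> real^'d. norm12 n X \<le> 1 \<longrightarrow> norm12 n Y \<le> 1 \<longrightarrow>
           c * (d_PM n X Y) powr \<alpha> \<le> d_HGW n X Y"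
  shows "\<alpha> \<ge> 2"
proof (rule ccontr)
  assume "\<not> \<alpha> \<ge> 2"
  then have a2: "\<alpha> < 2" by simp
  obtain i1 i2 :: 'd where i12: "i1 \<noteq> i2" using two_idx[OF assms(2)] by blast
  define N where "N = real n * real n"
  have Npos: "N > 0" using assms(1) unfolding N_def by simp
  define K where "K = c / 8 powr \<alpha>"
  have Kpos: "K > 0" using assms(3) unfolding K_def by simp
  have main: "K \<le> N * e powr (2 - \<alpha>)" if e: "0 < e" "e \<le> 1" for e
  proof -
    let ?X = "\<lambda>j. pt i1 i2 (xc j) (yc 0 j)" and ?Y = "\<lambda>j. pt i1 i2 (xc j) (yc e j)"
    have "norm12 n ?X \<le> 1" using norm12_le[OF i12 order_refl zero_le_one assms(1)] .
    moreover have "norm12 n ?Y \<le> 1" using norm12_le[OF i12 _ e(2) assms(1)] e(1) by simp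
    ultimately have h: "c * (d_PM n ?X ?Y) powr \<alpha> \<le> d_HGW n ?X ?Y" using assms(5) by blast
    have "(e/8) powr \<alpha> \<le> (d_PM n ?X ?Y) powr \<alpha>"
      using pm_ge[OF i12 e assms(1)] e assms(4) by (intro powr_mono2) auto
    then have "c * (e/8) powr \<alpha> \<le> N * e\<^sup>2"
      using h hgw_le[OF i12 e(1), of n] assms(3) unfolding N_def
      by (smt (verit) mult.assoc mult_left_mono)
    moreover have "(e/8) powr \<alpha> = e powr \<alpha> / 8 powr \<alpha>" using e by (simp add: powr_divide)
    moreover have "e\<^sup>2 = e powr \<alpha> * e powr (2 - \<alpha>)"
    proof -
      have "e\<^sup>2 = e powr 2" using e by (simp add: powr_numeral)
      also have "\<dots> = e powr (\<alpha> + (2 - \<alpha>))" by simp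
      also have "\<dots> = e powr \<alpha> * e powr (2 - \<alpha>)" by (rule powr_add)
      finally show ?thesis .
    qed
    ultimately have "K * e powr \<alpha> \<le> (N * e powr (2 - \<alpha>)) * e powr \<alpha>"
      unfolding K_def by (simp add: field_simps)
    moreover have "e powr \<alpha> > 0" using e by simp
    ultimately show ?thesis by simp
  qed
  define e where "e = min 1 ((K / (2 * N)) powr (1 / (2 - \<alpha>)))"
  have e0: "0 < e" unfolding e_def using Kpos Npos by simp
  have e1: "e \<le> 1" unfolding e_def by simp
  have "e powr (2 - \<alpha>) \<le> ((K / (2 * N)) powr (1 / (2 - \<alpha>))) powr (2 - \<alpha>)"
    using e0 a2 by (intro powr_mono2) (auto simp: e_def)
  also have "\<dots> = K / (2 * N)" using a2 Kpos Npos by (simp add: powr_powr)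
  finally have "N * e powr (2 - \<alpha>) \<le> N * (K / (2 * N))"
    by (rule mult_left_mono) (use Npos in auto)
  also have "\<dots> = K / 2" using Npos by simp
  finally have "N * e powr (2 - \<alpha>) \<le> K / 2" .
  with main[OF e0 e1] Kpos show False by linarith
qed

end
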